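(* Let $p\ge1$, $\phi_1,\dots,\phi_p:\mathbb Z\to\mathbb C$, integers $t>s$, $1\le m\le p$, and $n=t-s$. (i) For $1\le i\le n$, the cofactor of the $(i,1)$ entry (which is $\phi_{m+i-1}(s+i)$) of $\Phi^{(m)}_{t,s}$ equals $\xi_{t,s+i}$. (ii) For each entry in the last row of $\Phi^{(m)}_{t,s}$, written as $\phi_l(t)$ (so $l=n-j+1$ for the $(n,j)$ entry with $j\ge2$, and $l=m+n-1$ for the $(n,1)$ entry), its cofactor equals $\xi^{(m)}_{t-l,s}$.
   Context: Convention: $\phi_l(t)=0$ for $l>p$. For integers $t>s$ and $1\le m\le p$, $\Phi^{(m)}_{t,s}$ is the $(t-s)\times(t-s)$ lower Hessenberg matrix whose $(i,j)$ entry is: $\phi_{m+i-1}(s+i)$ if $j=1$; $-1$ if $j=i+1$; $\phi_{i-j+1}(s+i)$ if $2\le j\le i$; $0$ if $j>i+1$. For $t\ge s-p+1$: $\xi^{(m)}_{t,s}=\det\Phi^{(m)}_{t,s}$ if $t>s$; $\xi^{(m)}_{t,s}=1$ if $t=s-m+1$; $\xi^{(m)}_{t,s}=0$ if $s-p+1\le t\le s$, $t\ne s-m+1$. The principal determinant is $\xi_{t,s}=\xi^{(1)}_{t,s}$ (so $\xi_{t,t}=1$). The cofactor of the $(i,j)$ entry of a square matrix is $(-1)^{i+j}$ times the determinant of the matrix with row $i$ and column $j$ deleted. *)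

theory Defs
  imports "Jordan_Normal_Form.Determinant"
begin

definition coef :: "nat \<Rightarrow> (nat \<Rightarrow> int \<Rightarrow> complex) \<Rightarrow> nat \<Rightarrow> int \<Rightarrow> complex" where
  "coef p phi l u = (if l \<le> p then phi l u else 0)"

text \<open>The (t-s) x (t-s) lower Hessenberg matrix Phi^(m)_{t,s}; the 1-based entry (i,j)
  is stored at the 0-based position (i-1,j-1).\<close>
definition PhiMat :: "nat \<Rightarrow> (nat \<Rightarrow> int \<Rightarrow> complex) \<Rightarrow> nat \<Rightarrow> int \<Rightarrow> int \<Rightarrow> complex mat" where
  "PhiMat p phi m t s = mat (nat (t - s)) (nat (t - s)) (\<lambda>(a, b).
     let i = a + 1; j = b + 1 in
     if j = 1 then coef p phi (m + i - 1) (s + int i)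
     else if j = i + 1 then -1
     else if j \<le> i then coef p phi (i - j + 1) (s + int i)
     else 0)"

text \<open>xi^(m)_{t,s}; only meaningful for t \<ge> s-p+1 (value 0 below that range).\<close>
definition xi_m :: "nat \<Rightarrow> (nat \<Rightarrow> int \<Rightarrow> complex) \<Rightarrow> nat \<Rightarrow> int \<Rightarrow> int \<Rightarrow> complex" where
  "xi_m p phi m t s = (if t > s then det (PhiMat p phi m t s)
                       else if t = s - int m + 1 then 1 else 0)"

definition xi :: "nat \<Rightarrow> (nat \<Rightarrow> int \<Rightarrow> complex) \<Rightarrow> int \<Rightarrow> int \<Rightarrow> complex" where
  "xi p phi t s = xi_m p phi 1 t s"

text \<open>Cofactor of the 1-based (i,j) entry (JNF's cofactor is 0-based; the sign is unchanged).\<close>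
definition cof1 :: "complex mat \<Rightarrow> nat \<Rightarrow> nat \<Rightarrow> complex" where
  "cof1 A i j = cofactor A (i - 1) (j - 1)"

end

theory Submission imports Defs begin

lemma det_block_ur0:
  fixes M :: "'a::idom mat"
  assumes M: "M \<in> carrier_mat (k+l) (k+l)"
  and z: "\<And>r c. r < k \<Longrightarrow> k \<le> c \<Longrightarrow> c < k + l \<Longrightarrow> M $$ (r,c) = 0"
  shows "det M = det (mat k k (\<lambda>(r,c). M $$ (r,c))) * det (mat l l (\<lambda>(r,c). M $$ (k+r,k+c)))"
proof -
  let ?A = "mat k k (\<lambda>(r,c). M $$ (r,c))"
  let ?C = "mat l k (\<lambda>(r,c). M $$ (k+r,c))"
  let ?D = "mat l l (\<lambda>(r,c). M $$ (k+r,k+c))"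
  have "M = four_block_mat ?A (0\<^sub>m k l) ?C ?D"
    by (rule eq_matI) (use M z in auto)
  hence "det M = det (four_block_mat ?A (0\<^sub>m k l) ?C ?D)" by simp
  also have "\<dots> = det ?A * det ?D"
    by (rule det_four_block_mat_upper_right_zero) auto
  finally show ?thesis .
qed

lemma det_tri_m1:
  assumes d: "\<And>r. r < k \<Longrightarrow> f (r,r) = (-1::'a::comm_ring_1)"
  and u: "\<And>r c. r < c \<Longrightarrow> c < k \<Longrightarrow> f (r,c) = 0"
  shows "det (mat k k f) = (-1)^k"
proof -
  have "det (mat k k f) = prod_list (diag_mat (mat k k f))"
    by (rule det_lower_triangular[of k]) (use u in auto)
  also have "\<dots> = (\<Prod>i = 0..<k. (-1::'a))" unfolding prod_list_diag_prod using d by simp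
  finally show ?thesis by simp
qed

lemma PhiMat_idx:
  assumes "a < nat (t - s)" "b < nat (t - s)"
  shows "PhiMat p phi m t s $$ (a,b) =
    (if b = 0 then coef p phi (m + a) (s + int (a+1))
     else if b = a + 1 then -1
     else if b \<le> a then coef p phi (a - b + 1) (s + int (a+1))
     else 0)"
  using assms unfolding PhiMat_def by (auto simp: Let_def)

lemma PhiMat_carrier: "PhiMat p phi m t s \<in> carrier_mat (nat (t-s)) (nat (t-s))"
  unfolding PhiMat_def by auto

lemma part1:
  assumes i0: "i0 < nat (t - s)"
  shows "cofactor (PhiMat p phi m t s) i0 0 = xi p phi t (s + int (i0+1))"
proof -
  define N where "N = nat (t - s)"
  let ?P = "PhiMat p phi m t s"
  let ?M = "mat_delete ?P i0 0"
  have Mc: "?M \<in> carrier_mat (i0 + (N-1-i0)) (i0 + (N-1-i0))"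
    using mat_delete_carrier[OF PhiMat_carrier, of p phi m t s i0 0] i0 N_def by auto
  have Midx: "?M $$ (r,c) = ?P $$ (if r < i0 then r else Suc r, Suc c)" if "r < N-1" "c < N-1" for r c
    using that N_def unfolding mat_delete_def by (simp add: PhiMat_carrier[THEN carrier_matD(1)] PhiMat_carrier[THEN carrier_matD(2)])
  have "det ?M = det (mat i0 i0 (\<lambda>(r,c). ?M $$ (r,c))) * det (mat (N-1-i0) (N-1-i0) (\<lambda>(r,c). ?M $$ (i0+r,i0+c)))"
    by (rule det_block_ur0[OF Mc]) (use i0 N_def in \<open>auto simp: Midx PhiMat_idx\<close>)
  also have "det (mat i0 i0 (\<lambda>(r,c). ?M $$ (r,c))) = (-1)^i0"
    by (rule det_tri_m1) (use i0 N_def in \<open>auto simp: Midx PhiMat_idx\<close>)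
  also have "mat (N-1-i0) (N-1-i0) (\<lambda>(r,c). ?M $$ (i0+r,i0+c)) = PhiMat p phi 1 t (s + int (i0+1))"
  proof (rule eq_matI)
    have nn: "nat (t - (s + int (i0+1))) = N-1-i0" using i0 N_def by linarith
    show "dim_row (mat (N-1-i0) (N-1-i0) (\<lambda>(r,c). ?M $$ (i0+r,i0+c))) = dim_row (PhiMat p phi 1 t (s + int (i0+1)))"
      using PhiMat_carrier[of p phi 1 t "s + int (i0+1)"] nn by simp
    show "dim_col (mat (N-1-i0) (N-1-i0) (\<lambda>(r,c). ?M $$ (i0+r,i0+c))) = dim_col (PhiMat p phi 1 t (s + int (i0+1)))"
      using PhiMat_carrier[of p phi 1 t "s + int (i0+1)"] nn by simp
    fix r c assume "r < dim_row (PhiMat p phi 1 t (s + int (i0+1)))" "c < dim_col (PhiMat p phi 1 t (s + int (i0+1)))"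
    then have rc: "r < N-1-i0" "c < N-1-i0" using PhiMat_carrier[of p phi 1 t "s + int (i0+1)"] nn by auto
    have e: "(s + int (i0+1) + int (r+1)) = s + int (i0 + r + 2)" by simp
    show "mat (N-1-i0) (N-1-i0) (\<lambda>(r,c). ?M $$ (i0+r,i0+c)) $$ (r,c) = PhiMat p phi 1 t (s + int (i0+1)) $$ (r,c)"
      using rc i0 N_def nn by (auto simp: Midx PhiMat_idx e ac_simps)
  qed
  finally have dM: "det ?M = (-1)^i0 * det (PhiMat p phi 1 t (s + int (i0+1)))" .
  show ?thesis
  proof (cases "t > s + int (i0+1)")
    case True
    then show ?thesis unfolding cofactor_def xi_def xi_m_def dM by simp
  next
    case False
    then have "t = s + int (i0+1)" using i0 by linarith
    moreover have "PhiMat p phi 1 t (s + int (i0+1)) \<in> carrier_mat 0 0"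
      using PhiMat_carrier[of p phi 1 t "s + int (i0+1)"] i0 N_def False by simp
    ultimately show ?thesis unfolding cofactor_def xi_def xi_m_def dM by simp
  qed
qed


lemma part2:
  assumes j0: "1 \<le> j0" "j0 < nat (t - s)"
  shows "cofactor (PhiMat p phi m t s) (nat (t - s) - 1) j0 = det (PhiMat p phi m (s + int j0) s)"
proof -
  define N where "N = nat (t - s)"
  let ?P = "PhiMat p phi m t s"
  let ?M = "mat_delete ?P (N-1) j0"
  have Mc: "?M \<in> carrier_mat (j0 + (N-1-j0)) (j0 + (N-1-j0))"
    using mat_delete_carrier[OF PhiMat_carrier, of p phi m t s "N-1" j0] j0 N_def by auto
  have Midx: "?M $$ (r,c) = ?P $$ (r, if c < j0 then c else Suc c)" if "r < N-1" "c < N-1" for r c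
    using that N_def unfolding mat_delete_def by (simp add: PhiMat_carrier[THEN carrier_matD(1)] PhiMat_carrier[THEN carrier_matD(2)])
  have "det ?M = det (mat j0 j0 (\<lambda>(r,c). ?M $$ (r,c))) * det (mat (N-1-j0) (N-1-j0) (\<lambda>(r,c). ?M $$ (j0+r,j0+c)))"
  proof (rule det_block_ur0[OF Mc])
    fix r c assume rc: "r<j0" "j0 \<le> c" "c < j0 + (N-1-j0)"
    have "?M $$ (r,c) = ?P $$ (r, Suc c)" using Midx rc j0 by auto
    also have "\<dots> = 0" using rc j0 N_def by (simp add: PhiMat_idx)
    finally show "?M $$ (r,c) = 0" .
  qed
  also have "det (mat (N-1-j0) (N-1-j0) (\<lambda>(r,c). ?M $$ (j0+r,j0+c))) = (-1)^(N-1-j0)"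
  proof (rule det_tri_m1)
    fix r assume r: "r < N-1-j0"
    have "?M $$ (j0+r,j0+r) = ?P $$ (j0+r, Suc (j0+r))" using Midx r j0 by auto
    also have "\<dots> = -1" using r j0 N_def by (simp add: PhiMat_idx)
    finally show "(\<lambda>(r,c). ?M $$ (j0+r,j0+c)) (r,r) = -1" by simp
  next
    fix r c assume rc: "r < c" "c < N-1-j0"
    have "?M $$ (j0+r,j0+c) = ?P $$ (j0+r, Suc (j0+c))" using Midx rc j0 by auto
    also have "\<dots> = 0" using rc j0 N_def by (simp add: PhiMat_idx)
    finally show "(\<lambda>(r,c). ?M $$ (j0+r,j0+c)) (r,c) = 0" by simp
  qed
  also have "mat j0 j0 (\<lambda>(r,c). ?M $$ (r,c)) = PhiMat p phi m (s + int j0) s"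
  proof (rule eq_matI)
    have nn: "nat (s + int j0 - s) = j0" by simp
    show "dim_row (mat j0 j0 (\<lambda>(r,c). ?M $$ (r,c))) = dim_row (PhiMat p phi m (s + int j0) s)"
      using PhiMat_carrier[of p phi m "s + int j0" s] nn by simp
    show "dim_col (mat j0 j0 (\<lambda>(r,c). ?M $$ (r,c))) = dim_col (PhiMat p phi m (s + int j0) s)"
      using PhiMat_carrier[of p phi m "s + int j0" s] nn by simp
    fix r c assume "r < dim_row (PhiMat p phi m (s + int j0) s)" "c < dim_col (PhiMat p phi m (s + int j0) s)"
    then have rc: "r < j0" "c < j0" using PhiMat_carrier[of p phi m "s + int j0" s] nn by auto
    show "mat j0 j0 (\<lambda>(r,c). ?M $$ (r,c)) $$ (r,c) = PhiMat p phi m (s + int j0) s $$ (r,c)"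
    proof -
      have "?M $$ (r,c) = ?P $$ (r,c)" using Midx rc j0 N_def by auto
      then show ?thesis using rc j0 N_def nn by (auto simp: PhiMat_idx ac_simps)
    qed
  qed
  finally have dM: "det ?M = det (PhiMat p phi m (s + int j0) s) * (-1)^(N-1-j0)" .
  have sg: "(-1::complex)^(N - 1 + j0) * (-1)^(N-1-j0) = 1"
  proof -
    have "(-1::complex)^(N - 1 + j0) * (-1)^(N-1-j0) = (-1)^(2*(N-1))"
      using j0 N_def by (simp add: power_add[symmetric])
    also have "\<dots> = 1" by (simp add: power_mult)
    finally show ?thesis .
  qed
  show ?thesis unfolding cofactor_def N_def[symmetric] dM using sg
    by (metis (no_types, lifting) mult.assoc mult.commute mult.left_neutral)
qed

theorem lemma1:
  fixes p m :: nat and phi :: "nat \<Rightarrow> int \<Rightarrow> complex" and t s :: int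
  assumes "p \<ge> 1" and "t > s" and "1 \<le> m" and "m \<le> p"
  shows "(\<forall>i. 1 \<le> i \<and> i \<le> nat (t - s) \<longrightarrow>
            cof1 (PhiMat p phi m t s) i 1 = xi p phi t (s + int i))
       \<and> cof1 (PhiMat p phi m t s) (nat (t - s)) 1
            = xi_m p phi m (t - int (m + nat (t - s) - 1)) s
       \<and> (\<forall>j. 2 \<le> j \<and> j \<le> nat (t - s) \<longrightarrow>
            cof1 (PhiMat p phi m t s) (nat (t - s)) j
              = xi_m p phi m (t - int (nat (t - s) - j + 1)) s)"
proof (intro conjI allI impI)
  fix i assume i: "1 \<le> i \<and> i \<le> nat (t - s)"
  then show "cof1 (PhiMat p phi m t s) i 1 = xi p phi t (s + int i)"
  proof -
    have "i - 1 < nat (t - s)" using i by linarith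
    then show ?thesis unfolding cof1_def using part1[of "i-1" t s p phi m] i by simp
  qed
next
  have "cof1 (PhiMat p phi m t s) (nat (t - s)) 1 = xi p phi t (s + int (nat (t-s)))"
    unfolding cof1_def using part1[of "nat (t-s) - 1" t s p phi m] assms by simp
  also have "\<dots> = 1" unfolding xi_def xi_m_def using assms by simp
  also have "\<dots> = xi_m p phi m (t - int (m + nat (t - s) - 1)) s"
    unfolding xi_m_def using assms by simp
  finally show "cof1 (PhiMat p phi m t s) (nat (t - s)) 1 = xi_m p phi m (t - int (m + nat (t - s) - 1)) s" .
next
  fix j assume j: "2 \<le> j \<and> j \<le> nat (t - s)"
  have e: "t - int (nat (t - s) - j + 1) = s + int (j - 1)" using j by linarith
  show "cof1 (PhiMat p phi m t s) (nat (t - s)) j = xi_m p phi m (t - int (nat (t - s) - j + 1)) s"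
  proof -
    have h: "1 \<le> j - 1" "j - 1 < nat (t - s)" "s + int (j-1) > s" using j by auto
    have "cof1 (PhiMat p phi m t s) (nat (t - s)) j = cofactor (PhiMat p phi m t s) (nat (t - s) - 1) (j - 1)"
      unfolding cof1_def ..
    also have "\<dots> = det (PhiMat p phi m (s + int (j-1)) s)" by (rule part2[OF h(1,2)])
    also have "\<dots> = xi_m p phi m (s + int (j-1)) s" unfolding xi_m_def using h(3) by simp
    finally show ?thesis unfolding e .
  qed
qed

end
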